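(* Let $w_0,w_1$ be words of length $N$. If $w_0\to w_1$ is a perfect star anagram with path $p$ and constant step size $S$ (i.e. $p$ is a perfect star path with $s_n=S$ for all $n$), then $w_1\to w_0$ is a perfect star anagram with the reversed path $\bar p$, whose steps are all equal to a constant $\bar S$ satisfying $\bar S S \bmod N = 1$.
   Context: A path of length $N$ is a vector $p=(p_0,\dots,p_{N-1})$ whose entries are the integers $0,\dots,N-1$ in some order; indices are cyclic, $p_N=p_0$. For an integer $x$, $x\bmod N$ is its remainder in $\{0,\dots,N-1\}$. If $w_0=a_0\cdots a_{N-1}$, then $p$ is a path for the anagram $w_0\to w_1$ if $w_1=a_{p_0}\cdots a_{p_{N-1}}$. The path differences are $d_n=p_{n+1}-p_n$, and the steps are $s_n=d_n$ if $|d_n|<N/2$; $s_n=N/2$ if $|d_n|=N/2$; $s_n=d_n-N$ if $d_n>N/2$; $s_n=d_n+N$ if $d_n<-N/2$. A star path is a path with $|s_n|\neq 1$ for all $n$; a perfect star path is a star path all of whose edge lengths $|s_n|$ are equal (equivalently all $s_n$ equal a common constant). The anagram is a perfect star anagram with path $p$ if $p$ is a path for it that is a perfect star path. The reversed path $\bar p$ is the inverse permutation of $p$: $\bar p_{p_n}=n$ and $p_{\bar p_n}=n$ for all $n$; it is a path for $w_1\to w_0$, and its steps $\bar s_n$ are defined from $\bar p$ in the same way. *)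

theory Defs
  imports Main
begin

(* A path of length N: the entries p 0, ..., p (N-1) are 0..N-1 in some order.
   Indices are cyclic: p_N = p_0, realised by p ((n+1) mod N). *)
definition is_path :: "nat \<Rightarrow> (nat \<Rightarrow> nat) \<Rightarrow> bool" where
  "is_path N p \<longleftrightarrow> bij_betw p {..<N} {..<N}"

definition path_diff :: "nat \<Rightarrow> (nat \<Rightarrow> nat) \<Rightarrow> nat \<Rightarrow> int" where
  "path_diff N p n = int (p (Suc n mod N)) - int (p n)"

definition path_step :: "nat \<Rightarrow> (nat \<Rightarrow> nat) \<Rightarrow> nat \<Rightarrow> int" where
  "path_step N p n =
     (let d = path_diff N p n in
      if 2 * \<bar>d\<bar> < int N then d
      else if 2 * \<bar>d\<bar> = int N then int N div 2
      else if 2 * d > int N then d - int N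
      else d + int N)"

definition star_path :: "nat \<Rightarrow> (nat \<Rightarrow> nat) \<Rightarrow> bool" where
  "star_path N p \<longleftrightarrow> is_path N p \<and> (\<forall>n<N. \<bar>path_step N p n\<bar> \<noteq> 1)"

definition perfect_star_path :: "nat \<Rightarrow> (nat \<Rightarrow> nat) \<Rightarrow> bool" where
  "perfect_star_path N p \<longleftrightarrow> star_path N p \<and>
     (\<forall>n<N. \<forall>m<N. \<bar>path_step N p n\<bar> = \<bar>path_step N p m\<bar>)"

definition path_for :: "nat \<Rightarrow> 'a list \<Rightarrow> 'a list \<Rightarrow> (nat \<Rightarrow> nat) \<Rightarrow> bool" where
  "path_for N w0 w1 p \<longleftrightarrow> length w0 = N \<and> length w1 = N \<and> is_path N p \<and>
     (\<forall>n<N. w1 ! n = w0 ! p n)"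

definition perfect_star_anagram :: "nat \<Rightarrow> 'a list \<Rightarrow> 'a list \<Rightarrow> (nat \<Rightarrow> nat) \<Rightarrow> bool" where
  "perfect_star_anagram N w0 w1 p \<longleftrightarrow> path_for N w0 w1 p \<and> perfect_star_path N p"

definition rev_path :: "nat \<Rightarrow> (nat \<Rightarrow> nat) \<Rightarrow> nat \<Rightarrow> nat" where
  "rev_path N p = the_inv_into {..<N} p"

end

theory Submission
  imports Defs "HOL-Number_Theory.Cong"
begin

lemma step_props:
  assumes "0 < N" "f (Suc n mod N) < N" "f n < N"
  shows "[path_step N f n = path_diff N f n] (mod int N)"
    and "- int N < 2 * path_step N f n" and "2 * path_step N f n \<le> int N"
proof -
  let ?d = "path_diff N f n"
  have d: "\<bar>?d\<bar> < int N" using assms unfolding path_diff_def by auto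
  have c1: "[?d - int N = ?d] (mod int N)" by (simp add: cong_iff_dvd_diff)
  have c2: "[?d + int N = ?d] (mod int N)" by (simp add: cong_iff_dvd_diff)
  have c3: "2 * \<bar>?d\<bar> = int N \<Longrightarrow> [int N div 2 = ?d] (mod int N)"
  proof -
    assume h: "2 * \<bar>?d\<bar> = int N"
    show ?thesis
    proof (cases "?d \<ge> 0")
      case True then have "int N div 2 = ?d" using h by presburger
      then show ?thesis by simp
    next
      case False
      then have "int N div 2 = ?d + int N" using h by presburger
      then show ?thesis using c2 by simp
    qed
  qed
  show "[path_step N f n = ?d] (mod int N)"
    unfolding path_step_def Let_def using c1 c2 c3 by auto
  show "- int N < 2 * path_step N f n" "2 * path_step N f n \<le> int N"
  proof -
    have h1: "2 * (int N div 2) \<le> int N" "0 \<le> int N div 2" by auto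
    show "- int N < 2 * path_step N f n" "2 * path_step N f n \<le> int N"
      unfolding path_step_def Let_def using d h1 assms(1)
      by (simp_all add: abs_if split: if_splits; linarith)+
  qed
qed

lemma uniq:
  fixes s t M :: int
  assumes "[s = t] (mod M)" "-M < 2*s" "2*s \<le> M" "-M < 2*t" "2*t \<le> M"
  shows "s = t"
proof -
  obtain k where k: "s - t = M * k" using assms(1) cong_iff_dvd_diff dvd_def by metis
  have "k = 0"
  proof (rule ccontr)
    assume "k \<noteq> 0"
    then consider "k \<ge> 1" | "k \<le> -1" by linarith
    then show False
    proof cases
      case 1
      have "M > 0" using assms by linarith
      then have "M * k \<ge> M" using 1 by (metis mult.right_neutral mult_left_mono less_imp_le)
      then show False using k assms by linarith
    next
      case 2
      have "M > 0" using assms by linarith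
      then have "M * k \<le> - M" using 2
        by (metis minus_mult_right mult.right_neutral mult_left_mono less_imp_le)
      then show False using k assms by linarith
    qed
  qed
  then show ?thesis using k by simp
qed

theorem mainTheorem10:
  fixes w0 w1 :: "'a list" and p :: "nat \<Rightarrow> nat" and N :: nat and S :: int
  assumes "2 \<le> N"
    and "length w0 = N" and "length w1 = N"
    and "perfect_star_anagram N w0 w1 p"
    and "\<forall>n<N. path_step N p n = S"
  shows "perfect_star_anagram N w1 w0 (rev_path N p) \<and>
         (\<exists>Sbar::int. (\<forall>n<N. path_step N (rev_path N p) n = Sbar) \<and> (Sbar * S) mod int N = 1)"
proof -
  let ?M = "int N"
  define q where "q = rev_path N p"
  have bij: "bij_betw p {..<N} {..<N}"
    using assms(4) unfolding perfect_star_anagram_def path_for_def is_path_def by blast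
  have w: "\<forall>n<N. w1 ! n = w0 ! p n"
    using assms(4) unfolding perfect_star_anagram_def path_for_def by blast
  have star: "\<forall>n<N. \<bar>path_step N p n\<bar> \<noteq> 1"
    using assms(4) unfolding perfect_star_anagram_def perfect_star_path_def star_path_def by blast
  have N0: "0 < N" using assms(1) by auto
  have pN: "\<And>n. n < N \<Longrightarrow> p n < N" using bij bij_betwE by blast
  have bq: "bij_betw q {..<N} {..<N}"
    unfolding q_def rev_path_def using bij bij_betw_the_inv_into by blast
  have qN: "\<And>m. m < N \<Longrightarrow> q m < N" using bq bij_betwE by blast
  have pq: "\<And>m. m < N \<Longrightarrow> p (q m) = m"
    unfolding q_def rev_path_def using bij
    by (metis bij_betw_def f_the_inv_into_f lessThan_iff)
  have S0: "S = path_step N p 0" using assms(5) N0 by auto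
  have Sr: "- ?M < 2 * S" "2 * S \<le> ?M"
    using step_props[of N p 0] S0 N0 pN by auto
  have S1: "\<bar>S\<bar> \<noteq> 1" using star S0 N0 by auto
  have pind: "n < N \<Longrightarrow> [int (p n) = int (p 0) + int n * S] (mod ?M)" for n
  proof (induction n)
    case 0 then show ?case by simp
  next
    case (Suc n)
    have sn: "Suc n mod N = Suc n" using Suc.prems by simp
    have "[path_step N p n = path_diff N p n] (mod ?M)"
      using step_props(1)[of N p n] N0 pN Suc.prems sn by auto
    then have "[S = int (p (Suc n)) - int (p n)] (mod ?M)"
      using assms(5) Suc.prems sn unfolding path_diff_def by auto
    then have "[S + int (p n) = (int (p (Suc n)) - int (p n)) + int (p n)] (mod ?M)"
      by (rule cong_add) simp
    then have "[int (p (Suc n)) = int (p n) + S] (mod ?M)"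
      by (simp add: cong_sym add.commute)
    moreover have "[int (p n) + S = int (p 0) + int n * S + S] (mod ?M)"
      using Suc by (intro cong_add) auto
    ultimately show ?case by (simp add: algebra_simps cong_trans)
  qed
  obtain T where T: "T < N" "p T = Suc (p 0) mod N"
    using bij N0 unfolding bij_betw_def
    by (metis imageE lessThan_iff mod_less_divisor)
  have "[int (p T) = int (p 0) + 1] (mod ?M)"
    using T(2) by (simp add: cong_def zmod_int add.commute)
  then have "[int (p 0) + int T * S = int (p 0) + 1] (mod ?M)"
    using pind[OF T(1)] by (meson cong_sym cong_trans)
  then have TS: "[int T * S = 1] (mod ?M)"
    using cong_add_lcancel by blast
  have qform: "m < N \<Longrightarrow> [int (q m) = (int m - int (p 0)) * int T] (mod ?M)" for m
  proof -
    assume m: "m < N"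
    have "[int m = int (p 0) + int (q m) * S] (mod ?M)"
      using pind[OF qN[OF m]] pq[OF m] by simp
    then have "[int m - int (p 0) = int (q m) * S] (mod ?M)"
      by (simp add: cong_iff_dvd_diff algebra_simps)
    then have "[(int m - int (p 0)) * int T = int (q m) * S * int T] (mod ?M)"
      by (rule cong_scalar_right)
    then have "[(int m - int (p 0)) * int T = int (q m) * (int T * S)] (mod ?M)"
      by (simp add: ac_simps)
    moreover have "[int (q m) * (int T * S) = int (q m) * 1] (mod ?M)"
      using TS by (rule cong_scalar_left)
    ultimately have "[(int m - int (p 0)) * int T = int (q m) * 1] (mod ?M)"
      by (rule cong_trans)
    then show ?thesis by (simp add: cong_sym)
  qed
  define r where "r = int T mod ?M"
  define Sb where "Sb = (if 2 * r \<le> ?M then r else r - ?M)"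
  have r: "0 \<le> r" "r < ?M" using N0 unfolding r_def by auto
  have Sbr: "- ?M < 2 * Sb" "2 * Sb \<le> ?M" using r unfolding Sb_def by auto
  have SbT: "[Sb = int T] (mod ?M)"
    unfolding Sb_def r_def by (simp add: cong_def)
  have qdiff: "[path_diff N q m = Sb] (mod ?M)" if m: "m < N" for m
  proof -
    have m1: "Suc m mod N < N" using N0 by simp
    have "[int (Suc m mod N) - int m = 1] (mod ?M)"
    proof (cases "Suc m = N")
      case True then have "- int m - 1 = - int N" by simp
      then have "int N dvd - int m - 1" by (metis dvd_minus_iff dvd_refl)
      then show ?thesis using True by (simp add: cong_iff_dvd_diff)
    next
      case False then have "Suc m < N" using m by simp
      then show ?thesis by simp
    qed
    have e: "[int (q (Suc m mod N)) - int (q m) =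
             (int (Suc m mod N) - int (p 0)) * int T - (int m - int (p 0)) * int T] (mod ?M)"
      using qform[OF m1] qform[OF m] by (rule cong_diff)
    have "(int (Suc m mod N) - int (p 0)) * int T - (int m - int (p 0)) * int T
          = (int (Suc m mod N) - int m) * int T" by (simp add: algebra_simps)
    moreover have "[(int (Suc m mod N) - int m) * int T = 1 * int T] (mod ?M)"
      using \<open>[int (Suc m mod N) - int m = 1] (mod ?M)\<close> by (rule cong_scalar_right)
    ultimately have "[int (q (Suc m mod N)) - int (q m) = int T] (mod ?M)"
      using e by (metis cong_trans mult_1)
    then show ?thesis using SbT unfolding path_diff_def
      by (metis cong_sym cong_trans)
  qed
  have qstep: "path_step N q m = Sb" if m: "m < N" for m
  proof (rule uniq)
    show "[path_step N q m = Sb] (mod ?M)"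
      using cong_trans[OF step_props(1)[of N q m] qdiff[OF m]] qN m N0 by simp
    show "- ?M < 2 * path_step N q m" "2 * path_step N q m \<le> ?M"
      using step_props(2,3)[of N q m] qN m N0 by auto
  qed (use Sbr in auto)
  have SbS: "[Sb * S = 1] (mod ?M)"
    using cong_trans[OF cong_scalar_right[OF SbT] TS] .
  have Sb1: "\<bar>Sb\<bar> \<noteq> 1"
  proof
    assume h: "\<bar>Sb\<bar> = 1"
    then consider "Sb = 1" | "Sb = -1" by linarith
    then show False
    proof cases
      case 1
      then have "[S = 1] (mod ?M)" using SbS by simp
      moreover have "- ?M < 2*1" "2*1 \<le> ?M" using assms(1) by auto
      ultimately have "S = 1" using uniq[OF _ Sr] by blast
      then show False using S1 by simp
    next
      case 2
      then have "[-S = 1] (mod ?M)" using SbS by simp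
      then have "[S = -1] (mod ?M)"
        by (metis cong_minus_minus_iff minus_minus)
      moreover have "N > 2" using Sbr 2 assms(1) by linarith
      then have "- ?M < 2*(-1)" "2*(-1) \<le> ?M" by auto
      ultimately have "S = -1" using uniq[OF _ Sr] by blast
      then show False using S1 by simp
    qed
  qed
  have part1: "perfect_star_anagram N w1 w0 q"
    unfolding perfect_star_anagram_def path_for_def perfect_star_path_def star_path_def is_path_def
    using assms(2,3) bq qstep Sb1 w pq qN by auto
  have part2: "(Sb * S) mod ?M = 1"
    using SbS assms(1) unfolding cong_def by simp
  show ?thesis using part1 part2 qstep unfolding q_def by blast
qed

end
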